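(* For every $p,q,r\in(0,\infty)$ there exists a constant $C=C(p,q,r)$ such that for every function $f\in L^p_\mu(\ell^q_\nu(\ell^r_\omega))$ on $X=\mathbb R\times(0,\infty)\times\mathbb R$ there exists $J=J(p,q,r,f)\in\mathbb N$ with $$\|f1_{X_J}\|_{L^p_\mu(\ell^q_\nu(\ell^r_\omega))}\le\|f\|_{L^p_\mu(\ell^q_\nu(\ell^r_\omega))}\le C\|f1_{X_J}\|_{L^p_\mu(\ell^q_\nu(\ell^r_\omega))},$$ where $X_J=(-2^JJ,2^JJ]\times(2^{-J},2^J]\times(-2^JJ,2^JJ]$.
   Context: $\omega$ is Lebesgue measure on $X$. Dyadic intervals $I(m,l)=(2^lm,2^l(m+1)]$; tiles $H(m,l,n)=I(m,l)\times(2^{l-1},2^l]\times I(n,-l)$. Strips $D(m,l)=I(m,l)\times(0,2^l]\times\mathbb R$ form $\mathcal D$, $\sigma(D(m,l))=2^l$. Trees $T(m,l,n)=\bigcup_{l'\le l}\bigcup_{m':\,I(m',l')\subseteq I(m,l)}H(m',l',N(n,l'))$ ($N(n,l')$ the integer with $I(n,-l)\subseteq I(N(n,l'),-l')$) form $\mathcal T$, $\tau(T(m,l,n))=2^l$. $\mu(A)=\inf\{\sum_{S\in\mathcal S'}\sigma(S):\mathcal S'\subseteq\mathcal D,A\subseteq\bigcup\mathcal S'\}$, $\nu$ likewise from $(\mathcal T,\tau)$. For $\omega$-measurable $f$: $\ell^r_\omega(f)(T)=\nu(T)^{-1/r}\|f1_T\|_{L^r(X,\omega)}$ ($T\in\mathcal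 T$); $\|f\|_{L^\infty_\nu(\ell^r_\omega)}=\sup_{T\in\mathcal T}\ell^r_\omega(f)(T)$; $\nu(\ell^r_\omega(f)>\lambda)=\inf\{\nu(B):B\text{ measurable},\|f1_{X\setminus B}\|_{L^\infty_\nu(\ell^r_\omega)}\le\lambda\}$; $\|f\|_{L^q_\nu(\ell^r_\omega)}=(\int_0^\infty q\lambda^{q-1}\nu(\ell^r_\omega(f)>\lambda)d\lambda)^{1/q}$. Then $\ell^q_\nu(\ell^r_\omega)(f)(D)=\mu(D)^{-1/q}\|f1_D\|_{L^q_\nu(\ell^r_\omega)}$ ($D\in\mathcal D$); $\|f\|_{L^\infty_\mu(\ell^q_\nu(\ell^r_\omega))}=\sup_{D\in\mathcal D}\ell^q_\nu(\ell^r_\omega)(f)(D)$; $\mu(\ell^q_\nu(\ell^r_\omega)(f)>\lambda)=\inf\{\mu(B):\|f1_{X\setminus B}\|_{L^\infty_\mu(\ell^q_\nu(\ell^r_\omega))}\le\lambda\}$; $\|f\|_{L^p_\mu(\ell^q_\nu(\ell^r_\omega))}=(\int_0^\infty p\lambda^{p-1}\mu(\ell^q_\nu(\ell^r_\omega)(f)>\lambda)d\lambda)^{1/p}$; membership means finiteness. *)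

theory Defs
  imports "HOL-Analysis.Analysis"
begin

type_synonym pt = "real \<times> real \<times> real"

definition Xsp :: "pt set" where
  "Xsp = {(x, s, \<xi>). 0 < s}"

definition omega :: "pt measure" where
  "omega = lebesgue_on Xsp"

definition epow :: "ennreal \<Rightarrow> real \<Rightarrow> ennreal" where
  "epow x a = (if x = \<infinity> then \<infinity> else ennreal (enn2real x powr a))"

definition restr :: "(pt \<Rightarrow> complex) \<Rightarrow> pt set \<Rightarrow> pt \<Rightarrow> complex" where
  "restr f A = (\<lambda>z. if z \<in> A then f z else 0)"

definition dI :: "int \<Rightarrow> int \<Rightarrow> real set" where
  "dI m l = {2 powr l * m <.. 2 powr l * (m + 1)}"

definition tile :: "int \<Rightarrow> int \<Rightarrow> int \<Rightarrow> pt set" where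
  "tile m l n = {(x, s, \<xi>). x \<in> dI m l \<and> s \<in> {2 powr (l - 1) <.. 2 powr l} \<and> \<xi> \<in> dI n (- l)}"

definition strip :: "int \<Rightarrow> int \<Rightarrow> pt set" where
  "strip m l = {(x, s, \<xi>). x \<in> dI m l \<and> 0 < s \<and> s \<le> 2 powr l}"

text \<open>N(n,l,l') for l' <= l: the integer N with I(n,-l) contained in I(N,-l'),
  namely floor(n / 2^(l-l')).\<close>
definition Nidx :: "int \<Rightarrow> int \<Rightarrow> int \<Rightarrow> int" where
  "Nidx n l l' = n div 2 ^ nat (l - l')"

definition tree :: "int \<Rightarrow> int \<Rightarrow> int \<Rightarrow> pt set" where
  "tree m l n = (\<Union>{tile m' l' (Nidx n l l') | m' l'. l' \<le> l \<and> dI m' l' \<subseteq> dI m l})"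

text \<open>Outer measures generated by (D, sigma) and (T, tau); the (possibly infinite)
  sum over a subcollection is the supremum of its finite partial sums.\<close>
definition mu :: "pt set \<Rightarrow> ennreal" where
  "mu A = (INF S \<in> {S :: (int \<times> int) set. A \<subseteq> (\<Union>(m, l)\<in>S. strip m l)}.
             SUP F \<in> {F. finite F \<and> F \<subseteq> S}. \<Sum>(m, l)\<in>F. ennreal (2 powr l))"

definition nu :: "pt set \<Rightarrow> ennreal" where
  "nu A = (INF S \<in> {S :: (int \<times> int \<times> int) set. A \<subseteq> (\<Union>(m, l, n)\<in>S. tree m l n)}.
             SUP F \<in> {F. finite F \<and> F \<subseteq> S}. \<Sum>(m, l, n)\<in>F. ennreal (2 powr l))"

definition Lr_norm :: "real \<Rightarrow> (pt \<Rightarrow> complex) \<Rightarrow> ennreal" where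
  "Lr_norm r f = epow (\<integral>\<^sup>+ z. ennreal (cmod (f z) powr r) \<partial>omega) (1 / r)"

definition ell_r :: "real \<Rightarrow> (pt \<Rightarrow> complex) \<Rightarrow> pt set \<Rightarrow> ennreal" where
  "ell_r r f T = Lr_norm r (restr f T) / epow (nu T) (1 / r)"

definition Linf_nu :: "real \<Rightarrow> (pt \<Rightarrow> complex) \<Rightarrow> ennreal" where
  "Linf_nu r f = (SUP (m, l, n) \<in> UNIV. ell_r r f (tree m l n))"

definition level_nu :: "real \<Rightarrow> (pt \<Rightarrow> complex) \<Rightarrow> real \<Rightarrow> ennreal" where
  "level_nu r f t = (INF B \<in> {B. B \<in> sets omega \<and> Linf_nu r (restr f (Xsp - B)) \<le> ennreal t}. nu B)"

definition Lq_nu :: "real \<Rightarrow> real \<Rightarrow> (pt \<Rightarrow> complex) \<Rightarrow> ennreal" where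
  "Lq_nu q r f = epow (\<integral>\<^sup>+ t. indicator {0<..} t * ennreal (q * t powr (q - 1)) * level_nu r f t \<partial>lborel) (1 / q)"

definition ell_qr :: "real \<Rightarrow> real \<Rightarrow> (pt \<Rightarrow> complex) \<Rightarrow> pt set \<Rightarrow> ennreal" where
  "ell_qr q r f D = Lq_nu q r (restr f D) / epow (mu D) (1 / q)"

definition Linf_mu :: "real \<Rightarrow> real \<Rightarrow> (pt \<Rightarrow> complex) \<Rightarrow> ennreal" where
  "Linf_mu q r f = (SUP (m, l) \<in> UNIV. ell_qr q r f (strip m l))"

definition level_mu :: "real \<Rightarrow> real \<Rightarrow> (pt \<Rightarrow> complex) \<Rightarrow> real \<Rightarrow> ennreal" where
  "level_mu q r f t = (INF B \<in> {B. B \<in> sets omega \<and> Linf_mu q r (restr f (Xsp - B)) \<le> ennreal t}. mu B)"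

definition Lpqr :: "real \<Rightarrow> real \<Rightarrow> real \<Rightarrow> (pt \<Rightarrow> complex) \<Rightarrow> ennreal" where
  "Lpqr p q r f = epow (\<integral>\<^sup>+ t. indicator {0<..} t * ennreal (p * t powr (p - 1)) * level_mu q r f t \<partial>lborel) (1 / p)"

definition in_Lpqr :: "real \<Rightarrow> real \<Rightarrow> real \<Rightarrow> (pt \<Rightarrow> complex) \<Rightarrow> bool" where
  "in_Lpqr p q r f \<longleftrightarrow> f \<in> borel_measurable omega \<and> Lpqr p q r f < \<infinity>"

definition XJ :: "nat \<Rightarrow> pt set" where
  "XJ J = {2 ^ J * real J * (-1) <.. 2 ^ J * real J} \<times> {2 powr (- real J) <.. 2 ^ J}
          \<times> {2 ^ J * real J * (-1) <.. 2 ^ J * real J}"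

end

theory Submission
  imports Defs "HOL-Library.Diagonal_Subsequence"
begin


lemma epow_mono: assumes "x \<le> y" "0 < a" shows "epow x a \<le> epow y a"
proof (cases "y = \<infinity>")
  case True then show ?thesis by (simp add: epow_def)
next
  case False
  then have "x \<noteq> \<infinity>" using assms top.extremum_unique by fastforce
  moreover have "enn2real x \<le> enn2real y" using assms False by (simp add: enn2real_mono top.not_eq_extremum)
  ultimately show ?thesis using False assms
    by (simp add: epow_def ennreal_leI powr_mono2)
qed

lemma epow_inv: assumes "0 < p" shows "epow (epow x (1/p)) p = x"
proof (cases "x = \<infinity>")
  case True then show ?thesis by (simp add: epow_def)
next
  case False
  have "(enn2real x powr (1/p)) powr p = enn2real x"
    using assms by (simp add: powr_powr)
  then show ?thesis using False by (simp add: epow_def top.not_eq_extremum)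
qed

lemma epow_le_iff: assumes "0 < p" shows "epow x (1/p) \<le> a \<longleftrightarrow> x \<le> epow a p"
proof
  assume "epow x (1/p) \<le> a"
  then have "epow (epow x (1/p)) p \<le> epow a p" using assms epow_mono by blast
  then show "x \<le> epow a p" using epow_inv[OF assms] by simp
next
  assume "x \<le> epow a p"
  then have "epow x (1/p) \<le> epow (epow a p) (1/p)" using assms epow_mono by simp
  also have "epow (epow a p) (1/p) = a" using epow_inv[of "1/p" a] assms by simp
  finally show "epow x (1/p) \<le> a" .
qed

lemma liminf_le_SUP: "liminf (X :: nat \<Rightarrow> ennreal) \<le> (SUP n. X n)"
  unfolding liminf_SUP_INF by (rule SUP_mono) (auto intro: INF_lower2)

lemma epow_fatou:
  assumes "0 < p" "\<And>n. epow (I n) (1/p) \<le> a" "J \<le> liminf I"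
  shows "epow J (1/p) \<le> a"
proof -
  have "J \<le> (SUP n. I n)" using assms(3) liminf_le_SUP order_trans by blast
  also have "\<dots> \<le> epow a p" using assms(2) epow_le_iff[OF assms(1)] by (simp add: SUP_least)
  finally show ?thesis using epow_le_iff[OF assms(1)] by simp
qed

lemma bool_monoseq_ev:
  fixes X :: "nat \<Rightarrow> bool" assumes "monoseq X"
  shows "\<exists>b. \<forall>\<^sub>F n in sequentially. X n = b"
proof -
  { assume inc: "\<forall>m n. m \<le> n \<longrightarrow> X m \<le> X n"
    have ?thesis
    proof (cases "\<exists>m. X m")
      case True then obtain m where "X m" by blast
      then have "\<forall>n\<ge>m. X n = True" using inc by (metis le_boolD)
      then show ?thesis unfolding eventually_sequentially by blast
    qed auto }
  moreover
  { assume dec: "\<forall>m n. m \<le> n \<longrightarrow> X n \<le> X m"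
    have ?thesis
    proof (cases "\<exists>m. \<not> X m")
      case True then obtain m where "\<not> X m" by blast
      then have "\<forall>n\<ge>m. X n = False" using dec by (metis le_boolD)
      then show ?thesis unfolding eventually_sequentially by blast
    qed auto }
  ultimately show ?thesis using assms unfolding monoseq_def by blast
qed

lemma ev_subseq: assumes "strict_mono r" "\<forall>\<^sub>F n in sequentially. P n"
  shows "\<forall>\<^sub>F n in sequentially. P (r n)"
  using assms filterlim_subseq eventually_compose_filterlim by blast

lemma diag_sets:
  fixes S :: "nat \<Rightarrow> 'i::countable set"
  shows "\<exists>\<phi> T. strict_mono \<phi> \<and> (\<forall>i. \<forall>\<^sub>F n in sequentially. (i \<in> S (\<phi> n)) = (i \<in> T))"
proof -
  define P where "P = (\<lambda>k (r::nat\<Rightarrow>nat). \<exists>b. \<forall>\<^sub>F n in sequentially. (from_nat k \<in> S (r n)) = b)"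
  interpret subseqs P
  proof
    fix k and s :: "nat \<Rightarrow> nat" assume "strict_mono s"
    obtain f where f: "strict_mono f" "monoseq (\<lambda>n. from_nat k \<in> S (s (f n)))"
      using seq_monosub[of "\<lambda>n. from_nat k \<in> S (s n)"] by blast
    then show "\<exists>r'. strict_mono r' \<and> P k (s \<circ> r')"
      unfolding P_def using bool_monoseq_ev[OF f(2)] by auto
  qed
  have stable: "P n (s \<circ> r)" if "strict_mono r" "P n s" for r s n
    using that ev_subseq unfolding P_def o_def by blast
  have *: "P k diagseq" for k
  proof -
    have "P k (diagseq \<circ> ((+) (Suc k)))" by (rule diagseq_holds[OF stable])
    then obtain b where "\<forall>\<^sub>F n in sequentially. (from_nat k \<in> S (diagseq (Suc k + n))) = b"
      unfolding P_def o_def by blast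
    then have "\<forall>\<^sub>F n in sequentially. (from_nat k \<in> S (diagseq n)) = b"
      by (subst eventually_sequentially_seg[symmetric, of _ "Suc k"]) (simp add: add.commute)
    then show ?thesis unfolding P_def by blast
  qed
  define T where "T = {i. \<forall>\<^sub>F n in sequentially. i \<in> S (diagseq n)}"
  have "\<forall>\<^sub>F n in sequentially. (i \<in> S (diagseq n)) = (i \<in> T)" for i
  proof -
    obtain b where b: "\<forall>\<^sub>F n in sequentially. (i \<in> S (diagseq n)) = b"
      using *[of "to_nat i"] unfolding P_def by auto
    show ?thesis
    proof (cases b)
      case True then show ?thesis using b unfolding T_def by (auto elim: eventually_mono)
    next
      case False
      have "i \<notin> T"
      proof
        assume "i \<in> T"
        then have "\<forall>\<^sub>F n in sequentially. False" using b False unfolding T_def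
          by (auto dest: eventually_conj)
        then show False by simp
      qed
      then show ?thesis using b False by (auto elim: eventually_mono)
    qed
  qed
  then show ?thesis using subseq_diagseq by blast
qed




definition sub :: "(pt \<Rightarrow> complex) \<Rightarrow> (pt \<Rightarrow> complex) \<Rightarrow> bool" where
  "sub g f \<longleftrightarrow> (\<forall>z. g z = 0 \<or> g z = f z)"

definition monoS :: "((pt \<Rightarrow> complex) \<Rightarrow> ennreal) \<Rightarrow> bool" where
  "monoS Sz \<longleftrightarrow> (\<forall>f g. sub g f \<longrightarrow> Sz g \<le> Sz f)"

definition conv :: "(nat \<Rightarrow> pt \<Rightarrow> complex) \<Rightarrow> (pt \<Rightarrow> complex) \<Rightarrow> bool" where
  "conv g h \<longleftrightarrow> (\<forall>n. g n \<in> borel_measurable omega) \<and>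
     (\<forall>z\<in>Xsp. h z = 0 \<or> (\<forall>\<^sub>F n in sequentially. g n z = h z))"

definition fatouS :: "((pt \<Rightarrow> complex) \<Rightarrow> ennreal) \<Rightarrow> bool" where
  "fatouS Sz \<longleftrightarrow> (\<forall>g h. conv g h \<longrightarrow> Sz h \<le> (SUP n. Sz (g n)))"

definition omc :: "('i \<Rightarrow> pt set) \<Rightarrow> ('i \<Rightarrow> ennreal) \<Rightarrow> pt set \<Rightarrow> ennreal" where
  "omc G w A = (INF S \<in> {S. A \<subseteq> (\<Union>i\<in>S. G i)}. SUP F \<in> {F. finite F \<and> F \<subseteq> S}. \<Sum>i\<in>F. w i)"

definition lev :: "((pt \<Rightarrow> complex) \<Rightarrow> ennreal) \<Rightarrow> (pt set \<Rightarrow> ennreal) \<Rightarrow> (pt \<Rightarrow> complex) \<Rightarrow> real \<Rightarrow> ennreal" where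
  "lev Sz om f t = (INF B \<in> {B. B \<in> sets omega \<and> Sz (restr f (Xsp - B)) \<le> ennreal t}. om B)"

definition nrm :: "((pt \<Rightarrow> complex) \<Rightarrow> ennreal) \<Rightarrow> (pt set \<Rightarrow> ennreal) \<Rightarrow> real \<Rightarrow> (pt \<Rightarrow> complex) \<Rightarrow> ennreal" where
  "nrm Sz om p f = epow (\<integral>\<^sup>+ t. indicator {0<..} t * ennreal (p * t powr (p - 1)) * lev Sz om f t \<partial>lborel) (1 / p)"

lemma sub_restr: "sub g f \<Longrightarrow> sub (restr g A) (restr f A)"
  by (auto simp: sub_def restr_def)

lemma sub_restr_self: "sub (restr f A) f"
  by (auto simp: sub_def restr_def)

lemma sub_restr_mono: "A \<subseteq> B \<Longrightarrow> sub (restr f A) (restr f B)"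
  by (auto simp: sub_def restr_def)

lemma restr_restr: "restr (restr f A) B = restr f (A \<inter> B)"
  by (auto simp: restr_def)

lemma Xsp_borel: "Xsp \<in> sets borel"
proof -
  have "Xsp = {z::pt. 0 < fst (snd z)}" by (auto simp: Xsp_def)
  also have "\<dots> \<in> sets borel"
    by (intro borel_open open_Collect_less continuous_intros)
  finally show ?thesis .
qed

lemma Xsp_leb: "Xsp \<in> sets lebesgue"
  using Xsp_borel by auto

lemma space_omega: "space omega = Xsp"
  by (simp add: omega_def)

lemma leb_omega: "A \<in> sets lebesgue \<Longrightarrow> A \<inter> Xsp \<in> sets omega"
  by (auto simp: omega_def sets_restrict_space_iff Xsp_leb)

lemma restr_meas: "g \<in> borel_measurable omega \<Longrightarrow> A \<in> sets lebesgue \<Longrightarrow> restr g A \<in> borel_measurable omega"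
  unfolding restr_def
  by (rule measurable_If_set) (auto simp: space_omega leb_omega Int_commute)

lemma conv_subseq: "conv g h \<Longrightarrow> strict_mono r \<Longrightarrow> conv (\<lambda>n. g (r n)) h"
  unfolding conv_def using ev_subseq by blast

lemma conv_restr: "conv g h \<Longrightarrow> A \<in> sets lebesgue \<Longrightarrow> conv (\<lambda>n. restr (g n) A) (restr h A)"
  unfolding conv_def using restr_meas by (auto simp: restr_def elim!: eventually_mono)

lemma lev_mono: assumes "monoS Sz" "sub g f" shows "lev Sz om g t \<le> lev Sz om f t"
  unfolding lev_def
proof (rule INF_mono)
  fix B assume "B \<in> {B. B \<in> sets omega \<and> Sz (restr f (Xsp - B)) \<le> ennreal t}"
  moreover have "Sz (restr g (Xsp - B)) \<le> Sz (restr f (Xsp - B))"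
    using assms sub_restr unfolding monoS_def by blast
  ultimately show "\<exists>B'\<in>{B. B \<in> sets omega \<and> Sz (restr g (Xsp - B)) \<le> ennreal t}. om B' \<le> om B"
    by auto
qed

lemma lev_antimono: assumes "t \<le> t'" shows "lev Sz om f t' \<le> lev Sz om f t"
  unfolding lev_def
proof (rule INF_mono)
  fix B assume B: "B \<in> {B. B \<in> sets omega \<and> Sz (restr f (Xsp - B)) \<le> ennreal t}"
  have "ennreal t \<le> ennreal t'" using assms by (rule ennreal_leI)
  then show "\<exists>B'\<in>{B. B \<in> sets omega \<and> Sz (restr f (Xsp - B)) \<le> ennreal t'}. om B' \<le> om B"
    using B by (auto intro: order.trans)
qed

lemma antimono_meas:
  fixes F :: "real \<Rightarrow> ennreal"
  assumes "\<And>t t'. t \<le> t' \<Longrightarrow> F t' \<le> F t"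
  shows "F \<in> borel_measurable borel"
proof (rule borel_measurableI_greater)
  fix y
  have "is_interval {x. y < F x}"
    unfolding is_interval_1 using assms by (auto intro: less_le_trans)
  then show "{x \<in> space borel. y < F x} \<in> sets borel"
    using real_interval_borel_measurable by simp
qed

lemma lev_meas[measurable]: "(\<lambda>t. lev Sz om f t) \<in> borel_measurable borel"
  by (rule antimono_meas) (rule lev_antimono)

lemma nrm_mono: assumes "0 < p" "monoS Sz" shows "monoS (nrm Sz om p)"
  unfolding monoS_def nrm_def
proof (intro allI impI epow_mono)
  fix f g assume "sub g f"
  then show "(\<integral>\<^sup>+ t. indicator {0<..} t * ennreal (p * t powr (p - 1)) * lev Sz om g t \<partial>lborel)
      \<le> (\<integral>\<^sup>+ t. indicator {0<..} t * ennreal (p * t powr (p - 1)) * lev Sz om f t \<partial>lborel)"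
    by (intro nn_integral_mono mult_left_mono lev_mono[OF assms(2)]) auto
qed (use assms in auto)

lemma liminf_lemma:
  fixes X :: "nat \<Rightarrow> ennreal"
  assumes "\<And>r. strict_mono r \<Longrightarrow> X0 \<le> (SUP k::nat. X (r k))"
  shows "c * X0 \<le> liminf (\<lambda>n. c * X n)"
proof (rule dense_ge)
  fix y assume "liminf (\<lambda>n. c * X n) < y"
  then obtain y' where y': "y' < y" "\<not> (\<forall>\<^sub>F n in sequentially. y' < c * X n)"
    using le_Liminf_iff[of y sequentially "\<lambda>n. c * X n"] by (auto simp: not_le[symmetric])
  then have "frequently (\<lambda>n. c * X n \<le> y') sequentially"
    by (simp add: not_eventually not_less)
  then have "infinite {n. c * X n \<le> y'}"
    by (simp add: frequently_cofinite cofinite_eq_sequentially[symmetric])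
  then obtain r :: "nat \<Rightarrow> nat" where r: "strict_mono r" "\<And>n. c * X (r n) \<le> y'"
    using infinite_enumerate by blast
  have "c * X0 \<le> c * (SUP k::nat. X (r k))" using assms[OF r(1)] by (rule mult_left_mono) simp
  also have "\<dots> = (SUP k. c * X (r k))" by (simp add: SUP_mult_left_ennreal)
  also have "\<dots> \<le> y'" using r(2) by (simp add: SUP_least)
  finally show "c * X0 \<le> y" using y' by simp
qed

lemma nrm_fatou:
  assumes p: "0 < p"
    and L: "\<And>g h t. conv g h \<Longrightarrow> lev Sz om h t \<le> (SUP n. lev Sz om (g n) t)"
  shows "fatouS (nrm Sz om p)"
  unfolding fatouS_def
proof (intro allI impI)
  fix g h assume c: "conv g h"
  define w where "w t = indicator {0<..} t * ennreal (p * t powr (p - 1))" for t :: real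
  define I where "I n = (\<integral>\<^sup>+ t. w t * lev Sz om (g n) t \<partial>lborel)" for n
  have nI: "nrm Sz om p (g n) = epow (I n) (1/p)" for n
    by (simp add: nrm_def I_def w_def)
  have "(\<integral>\<^sup>+ t. w t * lev Sz om h t \<partial>lborel) \<le> (\<integral>\<^sup>+ t. liminf (\<lambda>n. w t * lev Sz om (g n) t) \<partial>lborel)"
  proof (intro nn_integral_mono liminf_lemma)
    fix t and r :: "nat \<Rightarrow> nat" assume "strict_mono r"
    then show "lev Sz om h t \<le> (SUP k. lev Sz om (g (r k)) t)"
      using L[OF conv_subseq[OF c]] by blast
  qed
  also have "\<dots> \<le> liminf I"
    unfolding I_def by (rule nn_integral_liminf) (unfold w_def, measurable)
  finally have "(\<integral>\<^sup>+ t. w t * lev Sz om h t \<partial>lborel) \<le> liminf I" .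
  then show "nrm Sz om p h \<le> (SUP n. nrm Sz om p (g n))"
    unfolding nrm_def w_def[symmetric]
    by (rule epow_fatou[OF p, rotated]) (auto simp: I_def intro: SUP_upper)
qed




definition cost :: "('i \<Rightarrow> ennreal) \<Rightarrow> 'i set \<Rightarrow> ennreal" where
  "cost w S = (SUP F \<in> {F. finite F \<and> F \<subseteq> S}. \<Sum>i\<in>F. w i)"

lemma omc_cost: "omc G w A = (INF S \<in> {S. A \<subseteq> (\<Union>i\<in>S. G i)}. cost w S)"
  by (simp add: omc_def cost_def)

lemma cost_single: "i \<in> S \<Longrightarrow> w i \<le> cost w S"
  unfolding cost_def by (rule SUP_upper2[of "{i}"]) auto

lemma lev_fatou:
  fixes G :: "'i::countable \<Rightarrow> pt set" and w :: "'i \<Rightarrow> ennreal"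
  assumes mS: "monoS Sz" and fS: "fatouS Sz"
    and Gm: "\<And>i. G i \<in> sets lebesgue"
    and fin: "\<And>z A. z \<in> Xsp \<Longrightarrow> finite {i. z \<in> G i \<and> w i \<le> ennreal A}"
    and c: "conv g h"
  shows "lev Sz (omc G w) h t \<le> (SUP n. lev Sz (omc G w) (g n) t)"
proof (rule dense_ge)
  fix A' assume aA: "(SUP n. lev Sz (omc G w) (g n) t) < A'"
  show "lev Sz (omc G w) h t \<le> A'"
  proof (cases "A' = \<infinity>")
    case True then show ?thesis by simp
  next
    case False
    then obtain A where A: "A' = ennreal A" by (cases A') auto
    have UNm: "(\<Union>i\<in>S. G i) \<in> sets lebesgue" for S
      by (rule sets.countable_UN') (auto simp: Gm)
    have "\<exists>S. Sz (restr (g n) (Xsp - (\<Union>i\<in>S. G i))) \<le> ennreal t \<and> cost w S < A'" for n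
    proof -
      have "lev Sz (omc G w) (g n) t < A'" using aA by (meson SUP_upper UNIV_I le_less_trans)
      then obtain B where B: "B \<in> sets omega" "Sz (restr (g n) (Xsp - B)) \<le> ennreal t" "omc G w B < A'"
        unfolding lev_def by (auto simp: INF_less_iff)
      then obtain S where S: "B \<subseteq> (\<Union>i\<in>S. G i)" "cost w S < A'"
        unfolding omc_cost by (auto simp: INF_less_iff)
      have "sub (restr (g n) (Xsp - (\<Union>i\<in>S. G i))) (restr (g n) (Xsp - B))"
        using S(1) by (intro sub_restr_mono) auto
      then have "Sz (restr (g n) (Xsp - (\<Union>i\<in>S. G i))) \<le> ennreal t"
        using mS B(2) unfolding monoS_def by (meson order.trans)
      then show ?thesis using S(2) by blast
    qed
    then obtain S where S: "\<And>n. Sz (restr (g n) (Xsp - (\<Union>i\<in>S n. G i))) \<le> ennreal t"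
      "\<And>n. cost w (S n) < A'"
      by metis
    obtain \<phi> T where \<phi>: "strict_mono \<phi>" and T: "\<And>i. \<forall>\<^sub>F n in sequentially. (i \<in> S (\<phi> n)) = (i \<in> T)"
      using diag_sets[of S] by blast
    have costT: "cost w T \<le> A'"
      unfolding cost_def
    proof (rule SUP_least)
      fix F assume F: "F \<in> {F. finite F \<and> F \<subseteq> T}"
      then have "\<forall>\<^sub>F n in sequentially. \<forall>i\<in>F. (i \<in> S (\<phi> n)) = (i \<in> T)"
        using T by (intro eventually_ball_finite) auto
      then obtain n where "\<forall>i\<in>F. (i \<in> S (\<phi> n)) = (i \<in> T)"
        unfolding eventually_sequentially by blast
      then have "F \<subseteq> S (\<phi> n)" using F by auto
      then have "(\<Sum>i\<in>F. w i) \<le> cost w (S (\<phi> n))"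
        unfolding cost_def using F by (intro SUP_upper) auto
      then show "(\<Sum>i\<in>F. w i) \<le> A'" using S(2)[of "\<phi> n"] by simp
    qed
    define C where "C = (\<Union>i\<in>T. G i) \<inter> Xsp"
    have Cm: "C \<in> sets omega" unfolding C_def by (rule leb_omega[OF UNm])
    have rC: "restr h (Xsp - C) = restr h (Xsp - (\<Union>i\<in>T. G i))"
      unfolding C_def by (rule ext) (auto simp: restr_def)
    have cv: "conv (\<lambda>n. restr (g (\<phi> n)) (Xsp - (\<Union>i\<in>S (\<phi> n). G i))) (restr h (Xsp - (\<Union>i\<in>T. G i)))"
      unfolding conv_def
    proof (intro conjI allI ballI)
      fix n show "restr (g (\<phi> n)) (Xsp - (\<Union>i\<in>S (\<phi> n). G i)) \<in> borel_measurable omega"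
        using c unfolding conv_def by (intro restr_meas) (auto intro!: sets.Diff Xsp_leb UNm)
    next
      fix z assume z: "z \<in> Xsp"
      show "restr h (Xsp - (\<Union>i\<in>T. G i)) z = 0 \<or>
         (\<forall>\<^sub>F n in sequentially. restr (g (\<phi> n)) (Xsp - (\<Union>i\<in>S (\<phi> n). G i)) z = restr h (Xsp - (\<Union>i\<in>T. G i)) z)"
      proof (cases "restr h (Xsp - (\<Union>i\<in>T. G i)) z = 0")
        case False
        then have hz: "h z \<noteq> 0" and zT: "z \<notin> (\<Union>i\<in>T. G i)" by (auto simp: restr_def split: if_splits)
        have e1: "\<forall>\<^sub>F n in sequentially. g (\<phi> n) z = h z"
          using c hz z unfolding conv_def using ev_subseq[OF \<phi>] by blast
        define K where "K = {i. z \<in> G i \<and> w i \<le> ennreal A}"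
        have "finite K" unfolding K_def using fin z by blast
        then have e2: "\<forall>\<^sub>F n in sequentially. \<forall>i\<in>K. (i \<in> S (\<phi> n)) = (i \<in> T)"
          using T by (intro eventually_ball_finite) auto
        have "\<forall>\<^sub>F n in sequentially. restr (g (\<phi> n)) (Xsp - (\<Union>i\<in>S (\<phi> n). G i)) z = restr h (Xsp - (\<Union>i\<in>T. G i)) z"
          using e1 e2
        proof eventually_elim
          case (elim n)
          have "z \<notin> (\<Union>i\<in>S (\<phi> n). G i)"
          proof
            assume "z \<in> (\<Union>i\<in>S (\<phi> n). G i)"
            then obtain i where i: "i \<in> S (\<phi> n)" "z \<in> G i" by blast
            have "w i \<le> ennreal A" using cost_single[OF i(1), of w] S(2)[of "\<phi> n"] A by simp
            then have "i \<in> K" using i K_def by blast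
            then have "i \<in> T" using elim(2) i by blast
            then show False using zT i by blast
          qed
          then show ?case using elim(1) z zT by (simp add: restr_def)
        qed
        then show ?thesis by blast
      qed simp
    qed
    have "Sz (restr h (Xsp - C)) \<le> ennreal t"
      using fS cv S(1) unfolding fatouS_def rC by (meson SUP_least order.trans)
    then have "lev Sz (omc G w) h t \<le> omc G w C"
      unfolding lev_def using Cm by (intro INF_lower) auto
    also have "\<dots> \<le> cost w T"
      unfolding omc_cost C_def by (rule INF_lower) auto
    finally show ?thesis using costT by simp
  qed
qed

lemma Lr_mono: assumes "0 < r" shows "monoS (Lr_norm r)"
  unfolding monoS_def Lr_norm_def
proof (intro allI impI epow_mono)
  fix f g assume s: "sub g f"
  have "cmod (g z) powr r \<le> cmod (f z) powr r" for z
    using s assms unfolding sub_def by (metis norm_ge_zero norm_zero order_refl powr_mono2 less_imp_le)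
  then show "(\<integral>\<^sup>+ z. ennreal (cmod (g z) powr r) \<partial>omega) \<le> (\<integral>\<^sup>+ z. ennreal (cmod (f z) powr r) \<partial>omega)"
    by (intro nn_integral_mono ennreal_leI) auto
qed (use assms in auto)

lemma Lr_fatou: assumes r: "0 < r" shows "fatouS (Lr_norm r)"
  unfolding fatouS_def
proof (intro allI impI)
  fix g h assume c: "conv g h"
  define I where "I n = (\<integral>\<^sup>+ z. ennreal (cmod (g n z) powr r) \<partial>omega)" for n
  have "(\<integral>\<^sup>+ z. ennreal (cmod (h z) powr r) \<partial>omega) \<le> (\<integral>\<^sup>+ z. liminf (\<lambda>n. ennreal (cmod (g n z) powr r)) \<partial>omega)"
  proof (rule nn_integral_mono)
    fix z assume "z \<in> space omega"
    then have z: "z \<in> Xsp" by (simp add: space_omega)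
    show "ennreal (cmod (h z) powr r) \<le> liminf (\<lambda>n. ennreal (cmod (g n z) powr r))"
    proof (cases "h z = 0")
      case False
      then have "\<forall>\<^sub>F n in sequentially. g n z = h z" using c z unfolding conv_def by blast
      then have "\<forall>\<^sub>F n in sequentially. ennreal (cmod (g n z) powr r) = ennreal (cmod (h z) powr r)"
        by (auto elim: eventually_mono)
      then have "liminf (\<lambda>n. ennreal (cmod (g n z) powr r)) = ennreal (cmod (h z) powr r)"
        by (intro lim_imp_Liminf) (auto intro: tendsto_eventually)
      then show ?thesis by simp
    qed simp
  qed
  also have "\<dots> \<le> liminf I"
    unfolding I_def
  proof (rule nn_integral_liminf)
    fix n have "g n \<in> borel_measurable omega" using c unfolding conv_def by blast
    then show "(\<lambda>z. ennreal (cmod (g n z) powr r)) \<in> borel_measurable omega" by measurable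
  qed
  finally show "Lr_norm r h \<le> (SUP n. Lr_norm r (g n))"
    unfolding Lr_norm_def
    by (rule epow_fatou[OF r, rotated]) (auto simp: I_def intro: SUP_upper)
qed

lemma wrap_mono: assumes "monoS S0" shows "monoS (\<lambda>f. SUP j. S0 (restr f (E j)) / K j)"
  unfolding monoS_def
proof (intro allI impI SUP_mono)
  fix f g j assume "sub g f"
  then have "S0 (restr g (E j)) \<le> S0 (restr f (E j))" using assms sub_restr unfolding monoS_def by blast
  then show "\<exists>j'\<in>UNIV. S0 (restr g (E j)) / K j \<le> S0 (restr f (E j')) / K j'"
    unfolding divide_ennreal_def by (intro bexI[where x=j] mult_right_mono) auto
qed

lemma wrap_fatou: assumes "fatouS S0" "\<And>j. E j \<in> sets lebesgue"
  shows "fatouS (\<lambda>f. SUP j. S0 (restr f (E j)) / K j)"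
  unfolding fatouS_def
proof (intro allI impI SUP_least)
  fix g h j assume c: "conv g h"
  have "S0 (restr h (E j)) \<le> (SUP n. S0 (restr (g n) (E j)))"
    using assms(1) conv_restr[OF c assms(2)] unfolding fatouS_def by blast
  then have "S0 (restr h (E j)) / K j \<le> (SUP n. S0 (restr (g n) (E j))) / K j"
    unfolding divide_ennreal_def by (rule mult_right_mono) simp
  also have "\<dots> = (SUP n. S0 (restr (g n) (E j)) / K j)"
    unfolding divide_ennreal_def by (rule SUP_mult_right_ennreal)
  also have "\<dots> \<le> (SUP n. SUP j. S0 (restr (g n) (E j)) / K j)"
  proof (rule SUP_mono)
    fix n show "\<exists>m\<in>UNIV. S0 (restr (g n) (E j)) / K j \<le> (SUP j. S0 (restr (g m) (E j)) / K j)"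
      by (rule bexI[where x=n]) (auto intro: SUP_upper)
  qed
  finally show "S0 (restr h (E j)) / K j \<le> (SUP n. SUP j. S0 (restr (g n) (E j)) / K j)" .
qed




lemma m_fst[measurable]: "(\<lambda>z::pt. fst z) \<in> borel_measurable borel"
  by (intro borel_measurable_continuous_onI continuous_intros)
lemma m_fsnd[measurable]: "(\<lambda>z::pt. fst (snd z)) \<in> borel_measurable borel"
  by (intro borel_measurable_continuous_onI continuous_intros)
lemma m_ssnd[measurable]: "(\<lambda>z::pt. snd (snd z)) \<in> borel_measurable borel"
  by (intro borel_measurable_continuous_onI continuous_intros)

lemma dI_borel[measurable]: "dI m l \<in> sets borel"
  by (simp add: dI_def)

lemma tile_borel: "tile m l n \<in> sets borel"
proof -
  have "tile m l n = {z::pt. fst z \<in> dI m l \<and> fst (snd z) \<in> {2 powr (l - 1) <.. 2 powr l} \<and> snd (snd z) \<in> dI n (- l)}"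
    by (auto simp: tile_def)
  also have "\<dots> \<in> sets borel" by measurable
  finally show ?thesis .
qed

lemma strip_borel: "strip m l \<in> sets borel"
proof -
  have "strip m l = {z::pt. fst z \<in> dI m l \<and> 0 < fst (snd z) \<and> fst (snd z) \<le> 2 powr l}"
    by (auto simp: strip_def)
  also have "\<dots> \<in> sets borel" by measurable
  finally show ?thesis .
qed

lemma tree_borel: "tree m l n \<in> sets borel"
proof -
  have "tree m l n = (\<Union>(m', l')\<in>{(m', l'). l' \<le> l \<and> dI m' l' \<subseteq> dI m l}. tile m' l' (Nidx n l l'))"
    by (auto simp: tree_def)
  also have "\<dots> \<in> sets borel"
    by (rule sets.countable_UN') (auto intro: tile_borel)
  finally show ?thesis .
qed

lemma XJ_borel: "XJ J \<in> sets borel"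
proof -
  have "XJ J = {z::pt. fst z \<in> {2 ^ J * real J * (-1) <.. 2 ^ J * real J} \<and>
     fst (snd z) \<in> {2 powr (- real J) <.. 2 ^ J} \<and> snd (snd z) \<in> {2 ^ J * real J * (-1) <.. 2 ^ J * real J}}"
    by (auto simp: XJ_def)
  also have "\<dots> \<in> sets borel" by measurable
  finally show ?thesis .
qed

lemma dI_idx: assumes "x \<in> dI m l" shows "m = \<lceil>x / 2 powr l\<rceil> - 1"
proof -
  have p: "0 < 2 powr (real_of_int l)" by simp
  have "2 powr l * m < x" "x \<le> 2 powr l * (m + 1)" using assms by (auto simp: dI_def)
  then have "real_of_int (m + 1) - 1 < x / 2 powr l" "x / 2 powr l \<le> real_of_int (m + 1)"
    using p by (auto simp: field_simps)
  then have "\<lceil>x / 2 powr l\<rceil> = m + 1" by (rule ceiling_unique)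
  then show ?thesis by simp
qed

lemma le_pow_log: assumes "0 < s" "s \<le> 2 powr (real_of_int l)" shows "\<lfloor>log 2 s\<rfloor> \<le> l"
proof -
  have "log 2 s \<le> l" using assms by (simp add: log_le_iff)
  then show ?thesis by linarith
qed

lemma pow_le_A: assumes "ennreal (2 powr (real_of_int l)) \<le> ennreal A" shows "l \<le> \<lceil>log 2 A\<rceil>"
proof -
  have p: "0 < 2 powr (real_of_int l)" by simp
  then have "0 < A" using assms by (metis ennreal_le_iff2 ennreal_less_zero_iff not_le order_less_le_trans)
  then have "2 powr l \<le> A" using assms by simp
  then have "l \<le> log 2 A" using \<open>0 < A\<close> by (simp add: le_log_iff)
  then show ?thesis by linarith
qed

lemma fin_strip:
  assumes "z \<in> Xsp"
  shows "finite {i. z \<in> (\<lambda>(m, l). strip m l) i \<and> (\<lambda>(m::int, l::int). ennreal (2 powr l)) i \<le> ennreal A}"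
proof -
  obtain x s \<xi> where z: "z = (x, s, \<xi>)" by (cases z) auto
  then have s: "0 < s" using assms by (simp add: Xsp_def)
  have "{i. z \<in> (\<lambda>(m, l). strip m l) i \<and> (\<lambda>(m::int, l::int). ennreal (2 powr l)) i \<le> ennreal A}
        \<subseteq> (\<lambda>l::int. (\<lceil>x / 2 powr l\<rceil> - 1, l)) ` {\<lfloor>log 2 s\<rfloor> .. \<lceil>log 2 A\<rceil>}" (is "?L \<subseteq> ?R")
  proof
    fix i assume i: "i \<in> ?L"
    obtain m l where ml: "i = (m, l)" by (cases i) auto
    have h: "x \<in> dI m l" "s \<le> 2 powr l" "ennreal (2 powr l) \<le> ennreal A"
      using i ml z by (auto simp: strip_def)
    show "i \<in> ?R"
      unfolding ml using dI_idx[OF h(1)] le_pow_log[OF s h(2)] pow_le_A[OF h(3)] by auto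
  qed
  then show ?thesis by (rule finite_subset) auto
qed

lemma fin_tree:
  assumes "z \<in> Xsp"
  shows "finite {i. z \<in> (\<lambda>(m, l, n). tree m l n) i \<and> (\<lambda>(m::int, l::int, n::int). ennreal (2 powr l)) i \<le> ennreal A}"
proof -
  obtain x s \<xi> where z: "z = (x, s, \<xi>)" by (cases z) auto
  then have s: "0 < s" using assms by (simp add: Xsp_def)
  define L0 where "L0 = \<lfloor>log 2 s\<rfloor>"
  define L1 where "L1 = \<lceil>log 2 A\<rceil>"
  define K where "K = nat (L1 - L0)"
  define F where "F = (\<lambda>(l::int, l'::int, j::int). (\<lceil>x / 2 powr l\<rceil> - 1, l,
      (\<lceil>\<xi> / 2 powr (- l')\<rceil> - 1) * 2 ^ nat (l - l') + j))"
  have "{i. z \<in> (\<lambda>(m, l, n). tree m l n) i \<and> (\<lambda>(m::int, l::int, n::int). ennreal (2 powr l)) i \<le> ennreal A}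
        \<subseteq> F ` ({L0 .. L1} \<times> {L0 .. L0 + 1} \<times> {0 ..< 2 ^ K})"
  proof
    fix i assume i: "i \<in> {i. z \<in> (\<lambda>(m, l, n). tree m l n) i \<and> (\<lambda>(m::int, l::int, n::int). ennreal (2 powr l)) i \<le> ennreal A}"
    obtain m l n where mln: "i = (m, l, n)" by (cases i) auto
    have zt: "z \<in> tree m l n" and lA: "ennreal (2 powr l) \<le> ennreal A" using i mln by auto
    obtain m' l' where ml': "l' \<le> l" "dI m' l' \<subseteq> dI m l" "z \<in> tile m' l' (Nidx n l l')"
      using zt unfolding tree_def by blast
    have x: "x \<in> dI m l" and s1: "2 powr (l' - 1) < s" and s2: "s \<le> 2 powr l'"
      and xi: "\<xi> \<in> dI (Nidx n l l') (- l')"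
      using ml' z by (auto simp: tile_def)
    have L0l': "L0 \<le> l'" unfolding L0_def using le_pow_log[OF s s2] .
    have "real_of_int (l' - 1) < log 2 s" using s1 s by (simp add: less_log_iff)
    then have l'L0: "l' \<le> L0 + 1" unfolding L0_def by linarith
    have lL1: "l \<le> L1" unfolding L1_def using pow_le_A[OF lA] .
    define d where "d = (2::int) ^ nat (l - l')"
    have dpos: "0 < d" unfolding d_def by simp
    have "d \<le> 2 ^ K" unfolding d_def K_def
      by (rule power_increasing) (use L0l' lL1 ml'(1) in auto)
    moreover have "n mod d < d" "0 \<le> n mod d" using dpos by simp_all
    ultimately have j: "n mod d \<in> {0 ..< 2 ^ K}" by auto
    have N: "Nidx n l l' = \<lceil>\<xi> / 2 powr (- l')\<rceil> - 1"
      using dI_idx[OF xi] by simp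
    have nn: "n = (\<lceil>\<xi> / 2 powr (- l')\<rceil> - 1) * 2 ^ nat (l - l') + n mod d"
      using N unfolding Nidx_def d_def by (metis div_mult_mod_eq)
    have "i = F (l, l', n mod d)"
      unfolding mln F_def using dI_idx[OF x] nn by simp
    moreover have "(l, l', n mod d) \<in> {L0 .. L1} \<times> {L0 .. L0 + 1} \<times> {0 ..< 2 ^ K}"
      using j L0l' l'L0 lL1 ml'(1) by auto
    ultimately show "i \<in> F ` ({L0 .. L1} \<times> {L0 .. L0 + 1} \<times> {0 ..< 2 ^ K})" by blast
  qed
  then show ?thesis by (rule finite_subset) auto
qed




lemma tree_leb: "tree m l n \<in> sets lebesgue" using tree_borel by auto
lemma strip_leb: "strip m l \<in> sets lebesgue" using strip_borel by auto
lemma XJ_leb: "XJ J \<in> sets lebesgue" using XJ_borel by auto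

lemma mu_omc: "mu = omc (\<lambda>(m, l). strip m l) (\<lambda>(m::int, l::int). ennreal (2 powr l))"
  by (rule ext) (simp add: mu_def omc_def)

lemma nu_omc: "nu = omc (\<lambda>(m, l, n). tree m l n) (\<lambda>(m::int, l::int, n::int). ennreal (2 powr l))"
  by (rule ext) (simp add: nu_def omc_def)

lemma Linf_nu_eq: "Linf_nu r = (\<lambda>f. SUP j. Lr_norm r (restr f ((\<lambda>(m, l, n). tree m l n) j)) /
     (\<lambda>(m, l, n). epow (nu (tree m l n)) (1 / r)) j)"
  by (rule ext) (auto simp: Linf_nu_def ell_r_def split: prod.splits intro!: SUP_cong)

lemma Lq_nu_eq: "Lq_nu q r = nrm (Linf_nu r) nu q"
  by (rule ext) (simp add: Lq_nu_def nrm_def lev_def level_nu_def)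

lemma Linf_mu_eq: "Linf_mu q r = (\<lambda>f. SUP j. Lq_nu q r (restr f ((\<lambda>(m, l). strip m l) j)) /
     (\<lambda>(m, l). epow (mu (strip m l)) (1 / q)) j)"
  by (rule ext) (auto simp: Linf_mu_def ell_qr_def split: prod.splits intro!: SUP_cong)

lemma Lpqr_eq: "Lpqr p q r = nrm (Linf_mu q r) mu p"
  by (rule ext) (simp add: Lpqr_def nrm_def lev_def level_mu_def)

lemma Linf_nu_mono: "0 < r \<Longrightarrow> monoS (Linf_nu r)"
  unfolding Linf_nu_eq by (rule wrap_mono[OF Lr_mono])

lemma Linf_nu_fatou: "0 < r \<Longrightarrow> fatouS (Linf_nu r)"
  unfolding Linf_nu_eq by (rule wrap_fatou[OF Lr_fatou]) (auto intro: tree_leb)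

lemma Lq_nu_mono: "0 < q \<Longrightarrow> 0 < r \<Longrightarrow> monoS (Lq_nu q r)"
  unfolding Lq_nu_eq by (rule nrm_mono[OF _ Linf_nu_mono])

lemma Lq_nu_fatou: assumes "0 < q" "0 < r" shows "fatouS (Lq_nu q r)"
  unfolding Lq_nu_eq
proof (rule nrm_fatou[OF assms(1)])
  fix g h t assume "conv g h"
  then show "lev (Linf_nu r) nu h t \<le> (SUP n. lev (Linf_nu r) nu (g n) t)"
    unfolding nu_omc
    by (rule lev_fatou[OF Linf_nu_mono[OF assms(2)] Linf_nu_fatou[OF assms(2)], rotated 2])
       (auto intro: tree_leb fin_tree)
qed

lemma Linf_mu_mono: "0 < q \<Longrightarrow> 0 < r \<Longrightarrow> monoS (Linf_mu q r)"
  unfolding Linf_mu_eq by (rule wrap_mono[OF Lq_nu_mono])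

lemma Linf_mu_fatou: "0 < q \<Longrightarrow> 0 < r \<Longrightarrow> fatouS (Linf_mu q r)"
  unfolding Linf_mu_eq by (rule wrap_fatou[OF Lq_nu_fatou]) (auto intro: strip_leb)

lemma Lpqr_mono: "0 < p \<Longrightarrow> 0 < q \<Longrightarrow> 0 < r \<Longrightarrow> monoS (Lpqr p q r)"
  unfolding Lpqr_eq by (rule nrm_mono[OF _ Linf_mu_mono])

lemma Lpqr_fatou: assumes "0 < p" "0 < q" "0 < r" shows "fatouS (Lpqr p q r)"
  unfolding Lpqr_eq
proof (rule nrm_fatou[OF assms(1)])
  fix g h t assume "conv g h"
  then show "lev (Linf_mu q r) mu h t \<le> (SUP n. lev (Linf_mu q r) mu (g n) t)"
    unfolding mu_omc
    by (rule lev_fatou[OF Linf_mu_mono[OF assms(2,3)] Linf_mu_fatou[OF assms(2,3)], rotated 2])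
       (auto intro: strip_leb fin_strip)
qed

lemma ev_XJ: assumes "z \<in> Xsp" shows "\<forall>\<^sub>F J in sequentially. z \<in> XJ J"
proof -
  obtain x s \<xi> where z: "z = (x, s, \<xi>)" by (cases z) auto
  then have s: "0 < s" using assms by (simp add: Xsp_def)
  obtain N0 :: nat where N0: "max (max (\<bar>x\<bar> + 1) (\<bar>\<xi>\<bar> + 1)) (max s (1 / s)) < real N0"
    using reals_Archimedean2 by blast
  have "z \<in> XJ J" if J: "N0 \<le> J" for J
  proof -
    have "J < 2 ^ J" by (rule less_exp)
    then have J2: "real J < 2 ^ J" by (metis of_nat_less_iff of_nat_numeral of_nat_power)
    have NJ: "real N0 \<le> real J" using J by simp
    have "real J \<le> 2 ^ J * real J" using J2 by (simp add: mult_le_cancel_right1 less_imp_le)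
    then have bx: "\<bar>x\<bar> < 2 ^ J * real J" "\<bar>\<xi>\<bar> < 2 ^ J * real J" using N0 NJ by auto
    have "s < real N0" "1 / s < real N0" using N0 by auto
    then have "s < 2 ^ J" "1 / s < 2 ^ J" using NJ J2 by linarith+
    moreover note \<open>1 / s < 2 ^ J\<close>
    then have "1 / 2 ^ J < s" using s by (simp add: field_simps)
    then have "2 powr (- real J) < s" by (simp add: powr_minus powr_realpow divide_inverse)
    ultimately show ?thesis using bx unfolding z XJ_def by auto
  qed
  then show ?thesis unfolding eventually_sequentially by blast
qed




theorem lemma5p5:
  shows "\<forall>p q r :: real. 0 < p \<and> 0 < q \<and> 0 < r \<longrightarrow>
    (\<exists>C :: real. \<forall>f :: pt \<Rightarrow> complex. in_Lpqr p q r f \<longrightarrow>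
      (\<exists>J :: nat. Lpqr p q r (restr f (XJ J)) \<le> Lpqr p q r f \<and>
                  Lpqr p q r f \<le> ennreal C * Lpqr p q r (restr f (XJ J))))"
proof (intro allI impI)
  fix p q r :: real assume pqr: "0 < p \<and> 0 < q \<and> 0 < r"
  then have p: "0 < p" and q: "0 < q" and r: "0 < r" by auto
  show "\<exists>C :: real. \<forall>f :: pt \<Rightarrow> complex. in_Lpqr p q r f \<longrightarrow>
      (\<exists>J :: nat. Lpqr p q r (restr f (XJ J)) \<le> Lpqr p q r f \<and>
                  Lpqr p q r f \<le> ennreal C * Lpqr p q r (restr f (XJ J)))"
  proof -
  have "\<forall>f :: pt \<Rightarrow> complex. in_Lpqr p q r f \<longrightarrow>
      (\<exists>J :: nat. Lpqr p q r (restr f (XJ J)) \<le> Lpqr p q r f \<and>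
                  Lpqr p q r f \<le> ennreal 2 * Lpqr p q r (restr f (XJ J)))"
  proof (intro allI impI)
    fix f :: "pt \<Rightarrow> complex" assume fin: "in_Lpqr p q r f"
    let ?N = "Lpqr p q r"
    have fm: "f \<in> borel_measurable omega" and fl: "?N f < \<infinity>" using fin by (auto simp: in_Lpqr_def)
    have le: "?N (restr f (XJ J)) \<le> ?N f" for J
      using Lpqr_mono[OF p q r] sub_restr_self unfolding monoS_def by blast
    have c: "conv (\<lambda>J. restr f (XJ J)) f"
      unfolding conv_def
    proof (intro conjI allI ballI)
      fix J show "restr f (XJ J) \<in> borel_measurable omega" by (rule restr_meas[OF fm XJ_leb])
    next
      fix z assume "z \<in> Xsp"
      from ev_XJ[OF this] have "\<forall>\<^sub>F J in sequentially. restr f (XJ J) z = f z"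
        by (rule eventually_mono) (simp add: restr_def)
      then show "f z = 0 \<or> (\<forall>\<^sub>F J in sequentially. restr f (XJ J) z = f z)" by blast
    qed
    have sup: "?N f \<le> (SUP J. ?N (restr f (XJ J)))"
      using Lpqr_fatou[OF p q r] c unfolding fatouS_def by blast
    show "\<exists>J :: nat. ?N (restr f (XJ J)) \<le> ?N f \<and> ?N f \<le> ennreal 2 * ?N (restr f (XJ J))"
    proof (cases "?N f = 0")
      case True then show ?thesis using le by auto
    next
      case False
      obtain v where v: "?N f = ennreal v" "0 \<le> v" using fl by (cases "?N f") auto
      then have "0 < v" using False by (auto simp: not_le[symmetric])
      then have "ennreal (v / 2) < ?N f" using v by (simp add: ennreal_less_iff)
      then have "ennreal (v / 2) < (SUP J. ?N (restr f (XJ J)))" using sup by (rule less_le_trans)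
      then obtain J where J: "ennreal (v / 2) < ?N (restr f (XJ J))"
        by (auto simp: less_SUP_iff)
      have "?N f = ennreal (2 * (v / 2))" using v by simp
      also have "\<dots> = ennreal 2 * ennreal (v / 2)" by (rule ennreal_mult) (use v in auto)
      also have "\<dots> \<le> ennreal 2 * ?N (restr f (XJ J))"
        using J by (intro mult_left_mono) auto
      finally show ?thesis using le by blast
    qed
  qed
  then show ?thesis by blast
  qed
qed


end
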